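(* For every loop $\bar p$ based at $a\in K$, $\chi_{\bar p}^*\chi_{\bar p}=Q_{\bar p}\otimes I$ on $H_a\otimes l^2(S_a)$ (and zero on the other summands of $\mathcal H$), where $Q_{\bar p}$ is the orthogonal projection of $H_a$ onto the domain $H_{\bar p^{-1}*\bar p}=H_{\bar p}$.
   Context: $K$ is a partially ordered set. Elementary paths on $K$: for $b\le a$ the formal symbol $(b,a)$ and for $b\ge a$ the formal symbol $\overline{(b,a)}$; both have starting point $\partial_1=a$ and ending point $\partial_0=b$; $(a,a)=\overline{(a,a)}=:i_a$ is the trivial path. The reverse of $(b,a)$ is $\overline{(a,b)}$ and the reverse of $\overline{(b,a)}$ is $(a,b)$. $\overline S$ is the set of finite sequences $\bar p=s_n*\cdots*s_1$ of elementary paths with $\partial_0 s_{i-1}=\partial_1 s_i$; $\partial_1\bar p=\partial_1 s_1$, $\partial_0\bar p=\partial_0 s_n$, $\bar p^{-1}=s_1^{-1}*\cdots*s_n^{-1}$, and the concatenation $\bar p*\bar q$ is defined when $\partial_1\bar p=\partial_0\bar q$. The equivalence $\sim$ on $\overline S$ is the smallest equivalence relation compatible with concatenation such that for all $a\le b\le c$: $(a,b)*(b,c)\sim(a,c)$, $\overline{(c,b)}*\overline{(b,a)}\sim\overline{(c,a)}$, $(a,b)*\overline{(b,a)}\sim i_a$, $\overline{(b,a)}*(a,b)\sim i_b$. Equivalence classes $p=[\bar p]$ are called paths. $S_a$ denotes the set of paths $p$ with $\partial_0p=a$. A loop based at $a$ is $\bar p\in\overline S$ with $\partial_0\bar p=\partial_1\bar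 p=a$. For each $a\in K$, $H_a$ is a Hilbert space with orthonormal basis $\{e^a_n\}_{n\ge1}$; for $a\le b$, $\gamma_{ba}:H_a\to H_b$ is an isometry mapping each basis vector $e^a_n$ to a basis vector of $\{e^b_m\}$, with $\gamma_{aa}=\mathrm{id}$ and $\gamma_{ca}=\gamma_{cb}\gamma_{ba}$ for $a\le b\le c$. $l^2(S_a)$ is the Hilbert space with orthonormal basis $\{e_p\}_{p\in S_a}$, and $\mathcal H=\bigoplus_{a\in K}H_a\otimes l^2(S_a)$. For $a\le b$, $\chi_a^b\in B(\mathcal H)$ vanishes on all summands other than $H_a\otimes l^2(S_a)$ and satisfies $\chi_a^b(h\otimes e_p)=\gamma_{ba}(h)\otimes e_{[\overline{(b,a)}*\bar p]}$ for $h\in H_a$, $p\in S_a$, $\bar p\in p$; $\chi_a^{b*}$ is its adjoint. For an elementary path put $\chi_{\overline{(b,a)}}=\chi_a^b$ ($a\le b$) and $\chi_{(b,a)}=\chi_b^{a*}$ ($b\le a$), and for $\bar p=s_n*\cdots*s_1\in\overline S$ put $\chi_{\bar p}=\chi_{s_n}\cdots\chi_{s_1}$. The domain $H_{\bar p}$ of $\bar p$ is the closed subspace of $H_{\partial_1\bar p}$ consisting of the vectors $h$ with $\|\chi_{\bar p}(h\otimes e_s)\|=\|h\|$ for all $s\in S_{\partial_1\bar p}$. *)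

theory Defs
  imports "HOL-Analysis.Analysis"
begin

text \<open>Up b a is the elementary path (b,a) (requires b \<le> a);
  Dn b a is the elementary path overline (b,a) (requires b \<ge> a).
  Both start at a (partial_1) and end at b (partial_0).\<close>

datatype 'k elem = Up 'k 'k | Dn 'k 'k

fun estart :: "'k elem \<Rightarrow> 'k" where
  "estart (Up b a) = a" | "estart (Dn b a) = a"

fun eend :: "'k elem \<Rightarrow> 'k" where
  "eend (Up b a) = b" | "eend (Dn b a) = b"

fun evalid :: "'k::order elem \<Rightarrow> bool" where
  "evalid (Up b a) = (b \<le> a)" | "evalid (Dn b a) = (a \<le> b)"

fun einv :: "'k elem \<Rightarrow> 'k elem" where
  "einv (Up b a) = Dn a b" | "einv (Dn b a) = Up a b"

text \<open>A sequence s_n * ... * s_1 is represented by the list [s_n, ..., s_1];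
  concatenation p * q is list append p @ q.\<close>

definition pwf :: "'k::order elem list \<Rightarrow> bool" where
  "pwf xs \<longleftrightarrow> xs \<noteq> [] \<and> (\<forall>e\<in>set xs. evalid e) \<and>
     (\<forall>i. Suc i < length xs \<longrightarrow> estart (xs ! i) = eend (xs ! Suc i))"

definition pstart :: "'k elem list \<Rightarrow> 'k" where
  "pstart xs = estart (last xs)"

definition pend :: "'k elem list \<Rightarrow> 'k" where
  "pend xs = eend (hd xs)"

definition pinv :: "'k elem list \<Rightarrow> 'k elem list" where
  "pinv xs = map einv (rev xs)"

inductive peq :: "'k::order elem list \<Rightarrow> 'k elem list \<Rightarrow> bool" where
  peq_refl: "pwf p \<Longrightarrow> peq p p"
| peq_sym: "peq p q \<Longrightarrow> peq q p"
| peq_trans: "peq p q \<Longrightarrow> peq q r \<Longrightarrow> peq p r"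
| peq_cat: "peq p p' \<Longrightarrow> peq q q' \<Longrightarrow> pstart p = pend q \<Longrightarrow> peq (p @ q) (p' @ q')"
| peq_triv: "peq [Up a a] [Dn a a]"
| peq_up: "a \<le> b \<Longrightarrow> b \<le> c \<Longrightarrow> peq [Up a b, Up b c] [Up a c]"
| peq_dn: "a \<le> b \<Longrightarrow> b \<le> c \<Longrightarrow> peq [Dn c b, Dn b a] [Dn c a]"
| peq_updn: "a \<le> b \<Longrightarrow> peq [Up a b, Dn b a] [Up a a]"
| peq_dnup: "a \<le> b \<Longrightarrow> peq [Dn b a, Up a b] [Up b b]"

definition pclass :: "'k::order elem list \<Rightarrow> 'k elem list set" where
  "pclass xs = {ys. peq xs ys}"

definition Spaths :: "'k::order \<Rightarrow> 'k elem list set set" where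
  "Spaths a = {pclass xs | xs. pwf xs \<and> pend xs = a}"

definition pre :: "'k::order elem \<Rightarrow> 'k elem list set \<Rightarrow> 'k elem list set" where
  "pre e P = {ys. \<exists>xs\<in>P. peq (e # xs) ys}"

definition l2 :: "'i set \<Rightarrow> ('i \<Rightarrow> complex) set" where
  "l2 A = {f. (\<forall>i. i \<notin> A \<longrightarrow> f i = 0) \<and> (\<lambda>i. (cmod (f i))\<^sup>2) summable_on UNIV}"

definition l2norm :: "('i \<Rightarrow> complex) \<Rightarrow> real" where
  "l2norm f = sqrt (infsum (\<lambda>i. (cmod (f i))\<^sup>2) UNIV)"

definition l2inner :: "('i \<Rightarrow> complex) \<Rightarrow> ('i \<Rightarrow> complex) \<Rightarrow> complex" where
  "l2inner f g = infsum (\<lambda>i. cnj (f i) * g i) UNIV"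

text \<open>Basis vector e_n of H_a = l2(nat).\<close>
definition ebasis :: "nat \<Rightarrow> nat \<Rightarrow> complex" where
  "ebasis n = (\<lambda>m. if m = n then 1 else 0)"

text \<open>Index set of the orthonormal basis of the big space
  H = direct sum over a of H_a \<otimes> l2(S_a): triples (a, n, p) with p \<in> S_a.\<close>
definition Bidx :: "('k::order \<times> nat \<times> 'k elem list set) set" where
  "Bidx = {(a, n, p). p \<in> Spaths a}"

abbreviation l2H :: "('k::order \<times> nat \<times> 'k elem list set \<Rightarrow> complex) set" where
  "l2H \<equiv> l2 Bidx"

text \<open>Elementary tensor h \<otimes> e_p in the summand H_a \<otimes> l2(S_a).\<close>
definition tens :: "'k \<Rightarrow> (nat \<Rightarrow> complex) \<Rightarrow> 'k elem list set
    \<Rightarrow> ('k \<times> nat \<times> 'k elem list set \<Rightarrow> complex)" where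
  "tens a h p = (\<lambda>(b, n, q). if b = a \<and> q = p then h n else 0)"

definition gamma_system :: "('k::order \<Rightarrow> 'k \<Rightarrow> (nat \<Rightarrow> complex) \<Rightarrow> (nat \<Rightarrow> complex)) \<Rightarrow> bool" where
  "gamma_system gam \<longleftrightarrow>
    (\<forall>a b. a \<le> b \<longrightarrow>
       (\<forall>h\<in>l2 UNIV. gam b a h \<in> l2 UNIV \<and> l2norm (gam b a h) = l2norm h) \<and>
       (\<forall>h\<in>l2 UNIV. \<forall>k\<in>l2 UNIV. gam b a (\<lambda>n. h n + k n) = (\<lambda>n. gam b a h n + gam b a k n)) \<and>
       (\<forall>h\<in>l2 UNIV. \<forall>c. gam b a (\<lambda>n. c * h n) = (\<lambda>n. c * gam b a h n)) \<and>
       (\<forall>n. \<exists>m. gam b a (ebasis n) = ebasis m)) \<and>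
    (\<forall>a. \<forall>h\<in>l2 UNIV. gam a a h = h) \<and>
    (\<forall>a b c. a \<le> b \<longrightarrow> b \<le> c \<longrightarrow> (\<forall>h\<in>l2 UNIV. gam c a h = gam c b (gam b a h)))"

definition bounded_op :: "(('i \<Rightarrow> complex) \<Rightarrow> ('i \<Rightarrow> complex)) \<Rightarrow> 'i set \<Rightarrow> bool" where
  "bounded_op T A \<longleftrightarrow>
     (\<forall>f\<in>l2 A. T f \<in> l2 A) \<and>
     (\<forall>f\<in>l2 A. \<forall>g\<in>l2 A. T (\<lambda>i. f i + g i) = (\<lambda>i. T f i + T g i)) \<and>
     (\<forall>f\<in>l2 A. \<forall>c. T (\<lambda>i. c * f i) = (\<lambda>i. c * T f i)) \<and>
     (\<exists>C. \<forall>f\<in>l2 A. l2norm (T f) \<le> C * l2norm f)"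

definition adj :: "'i set \<Rightarrow> (('i \<Rightarrow> complex) \<Rightarrow> ('i \<Rightarrow> complex)) \<Rightarrow> (('i \<Rightarrow> complex) \<Rightarrow> ('i \<Rightarrow> complex))" where
  "adj A T = (SOME T'. (\<forall>g\<in>l2 A. T' g \<in> l2 A) \<and>
       (\<forall>f\<in>l2 A. \<forall>g\<in>l2 A. l2inner (T f) g = l2inner f (T' g)))"

definition is_chi :: "('k::order \<Rightarrow> 'k \<Rightarrow> (nat \<Rightarrow> complex) \<Rightarrow> (nat \<Rightarrow> complex)) \<Rightarrow> 'k \<Rightarrow> 'k
     \<Rightarrow> (('k \<times> nat \<times> 'k elem list set \<Rightarrow> complex) \<Rightarrow> ('k \<times> nat \<times> 'k elem list set \<Rightarrow> complex)) \<Rightarrow> bool" where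
  "is_chi gam a b T \<longleftrightarrow>
     bounded_op T Bidx \<and>
     (\<forall>f\<in>l2H. (\<forall>n q. f (a, n, q) = 0) \<longrightarrow> T f = (\<lambda>_. 0)) \<and>
     (\<forall>h\<in>l2 UNIV. \<forall>p\<in>Spaths a. T (tens a h p) = tens b (gam b a h) (pre (Dn b a) p))"

definition chi :: "('k::order \<Rightarrow> 'k \<Rightarrow> (nat \<Rightarrow> complex) \<Rightarrow> (nat \<Rightarrow> complex)) \<Rightarrow> 'k \<Rightarrow> 'k
     \<Rightarrow> (('k \<times> nat \<times> 'k elem list set \<Rightarrow> complex) \<Rightarrow> ('k \<times> nat \<times> 'k elem list set \<Rightarrow> complex))" where
  "chi gam a b = (SOME T. is_chi gam a b T)"

fun chi_elem :: "('k::order \<Rightarrow> 'k \<Rightarrow> (nat \<Rightarrow> complex) \<Rightarrow> (nat \<Rightarrow> complex)) \<Rightarrow> 'k elem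
     \<Rightarrow> (('k \<times> nat \<times> 'k elem list set \<Rightarrow> complex) \<Rightarrow> ('k \<times> nat \<times> 'k elem list set \<Rightarrow> complex))" where
  "chi_elem gam (Dn b a) = chi gam a b"
| "chi_elem gam (Up b a) = adj Bidx (chi gam b a)"

definition chi_seq :: "('k::order \<Rightarrow> 'k \<Rightarrow> (nat \<Rightarrow> complex) \<Rightarrow> (nat \<Rightarrow> complex)) \<Rightarrow> 'k elem list
     \<Rightarrow> (('k \<times> nat \<times> 'k elem list set \<Rightarrow> complex) \<Rightarrow> ('k \<times> nat \<times> 'k elem list set \<Rightarrow> complex))" where
  "chi_seq gam xs = foldr (\<circ>) (map (chi_elem gam) xs) id"

definition Hdom :: "('k::order \<Rightarrow> 'k \<Rightarrow> (nat \<Rightarrow> complex) \<Rightarrow> (nat \<Rightarrow> complex)) \<Rightarrow> 'k elem list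
     \<Rightarrow> (nat \<Rightarrow> complex) set" where
  "Hdom gam xs = {h \<in> l2 UNIV. \<forall>s\<in>Spaths (pstart xs).
      l2norm (chi_seq gam xs (tens (pstart xs) h s)) = l2norm h}"

definition orth_proj :: "(nat \<Rightarrow> complex) set \<Rightarrow> (nat \<Rightarrow> complex) \<Rightarrow> (nat \<Rightarrow> complex)" where
  "orth_proj M h = (THE m. m \<in> M \<and> (\<forall>x\<in>M. l2inner (\<lambda>n. h n - m n) x = 0))"

text \<open>Q \<otimes> I on the summand H_a \<otimes> l2(S_a), zero on all other summands.\<close>
definition tensor_id :: "'k \<Rightarrow> ((nat \<Rightarrow> complex) \<Rightarrow> (nat \<Rightarrow> complex))
     \<Rightarrow> ('k \<times> nat \<times> 'k elem list set \<Rightarrow> complex) \<Rightarrow> ('k \<times> nat \<times> 'k elem list set \<Rightarrow> complex)" where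
  "tensor_id a Q f = (\<lambda>(b, n, q). if b = a then Q (\<lambda>m. f (a, m, q)) n else 0)"

end

theory Submission
  imports Defs
begin



abbreviation sqn :: "('i \<Rightarrow> complex) \<Rightarrow> 'i \<Rightarrow> real" where
  "sqn f \<equiv> (\<lambda>i. (cmod (f i))\<^sup>2)"

lemma l2_summ: "f \<in> l2 A \<Longrightarrow> sqn f summable_on UNIV"
  by (simp add: l2_def)

lemma l2_zero_out: "f \<in> l2 A \<Longrightarrow> i \<notin> A \<Longrightarrow> f i = 0"
  by (simp add: l2_def)

lemma sq_add_le: "(cmod (x + y))\<^sup>2 \<le> 2 * (cmod x)\<^sup>2 + 2 * (cmod y)\<^sup>2"
proof -
  have "cmod (x+y) \<le> cmod x + cmod y" by (rule norm_triangle_ineq)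
  hence "(cmod (x + y))\<^sup>2 \<le> (cmod x + cmod y)\<^sup>2"
    by (simp add: power_mono)
  also have "\<dots> \<le> 2 * (cmod x)\<^sup>2 + 2 * (cmod y)\<^sup>2"
    by (smt (verit) sum_squares_bound power2_sum)
  finally show ?thesis .
qed

lemma summ_add_sq:
  assumes "sqn f summable_on UNIV" "sqn g summable_on UNIV"
  shows "sqn (\<lambda>i. f i + g i) summable_on UNIV"
proof (rule summable_on_comparison_test)
  show "(\<lambda>i. 2 * (cmod (f i))\<^sup>2 + 2 * (cmod (g i))\<^sup>2) summable_on UNIV"
    using assms by (intro summable_on_add summable_on_cmult_right) auto
qed (auto simp: sq_add_le)

lemma l2_add: "f \<in> l2 A \<Longrightarrow> g \<in> l2 A \<Longrightarrow> (\<lambda>i. f i + g i) \<in> l2 A"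
  unfolding l2_def using summ_add_sq by auto

lemma l2_scale: "f \<in> l2 A \<Longrightarrow> (\<lambda>i. c * f i) \<in> l2 A"
  unfolding l2_def
  by (auto simp: norm_mult power_mult_distrib intro!: summable_on_cmult_right)

lemma summ_restr:
  assumes "sqn f summable_on UNIV"
  shows "sqn (\<lambda>i. if P i then f i else 0) summable_on UNIV"
  by (rule summable_on_comparison_test[OF assms]) auto

lemma l2_restr: "f \<in> l2 A \<Longrightarrow> (\<lambda>i. if P i then f i else 0) \<in> l2 A"
  unfolding l2_def using summ_restr by auto

lemma l2_zero_fun: "(\<lambda>_. 0) \<in> l2 A"
  unfolding l2_def by auto

lemma coord_bound:
  assumes "sqn f summable_on UNIV"
  shows "cmod (f j) \<le> l2norm f"
proof -
  have "sum (sqn f) {j} \<le> infsum (sqn f) UNIV"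
    by (rule finite_sum_le_infsum[OF assms]) auto
  hence "(cmod (f j))\<^sup>2 \<le> infsum (sqn f) UNIV" by simp
  hence "sqrt ((cmod (f j))\<^sup>2) \<le> l2norm f" unfolding l2norm_def
    using real_sqrt_le_mono by blast
  thus ?thesis by simp
qed

lemma l2norm_nonneg: "l2norm f \<ge> 0"
  unfolding l2norm_def by (simp add: infsum_nonneg)

lemma l2norm_eq0:
  assumes "sqn f summable_on UNIV" "l2norm f = 0"
  shows "f = (\<lambda>_. 0)"
  using coord_bound[OF assms(1)] assms(2) by fastforce




definition restr :: "('i \<Rightarrow> 'b) \<Rightarrow> 'b set \<Rightarrow> ('i \<Rightarrow> complex) \<Rightarrow> 'i \<Rightarrow> complex" where
  "restr P Q f = (\<lambda>i. if P i \<in> Q then f i else 0)"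

lemma l2_restrP: "f \<in> l2 A \<Longrightarrow> restr P Q f \<in> l2 A"
  unfolding restr_def by (rule l2_restr)

lemma tail_small:
  assumes sf: "sqn f summable_on UNIV" and e: "e > 0"
  shows "\<exists>Q. finite Q \<and> l2norm (restr P (- Q) f) < e"
proof -
  have e2: "e\<^sup>2 / 2 > 0" using e by simp
  obtain F where F: "finite F" "dist (sum (sqn f) F) (infsum (sqn f) UNIV) \<le> e\<^sup>2 / 2"
    using infsum_finite_approximation[OF sf e2] by blast
  have s1: "sqn f summable_on F" using F(1) by simp
  have s2: "sqn f summable_on (-F)" using summable_on_subset_banach[OF sf] by blast
  have "infsum (sqn f) UNIV = infsum (sqn f) (F \<union> -F)" by simp
  also have "\<dots> = infsum (sqn f) F + infsum (sqn f) (-F)"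
    by (rule infsum_Un_disjoint[OF s1 s2]) auto
  finally have split: "infsum (sqn f) UNIV = sum (sqn f) F + infsum (sqn f) (-F)"
    using F(1) by simp
  hence tl: "infsum (sqn f) (-F) \<le> e\<^sup>2 / 2" using F(2) by (simp add: dist_real_def)
  define Q where "Q = P ` F"
  have sr: "sqn (restr P (-Q) f) summable_on UNIV"
    unfolding restr_def using summ_restr[OF sf] by simp
  have "infsum (sqn (restr P (-Q) f)) UNIV = infsum (sqn (restr P (-Q) f)) (-F)"
    by (rule infsum_cong_neutral) (auto simp: restr_def Q_def)
  also have "\<dots> \<le> infsum (sqn f) (-F)"
    by (rule infsum_mono[OF summable_on_subset_banach[OF sr] s2]) (auto simp: restr_def)
  finally have "infsum (sqn (restr P (-Q) f)) UNIV \<le> e\<^sup>2 / 2" using tl by simp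
  hence "l2norm (restr P (-Q) f) \<le> sqrt (e\<^sup>2 / 2)" unfolding l2norm_def
    using real_sqrt_le_mono by blast
  also have "\<dots> < sqrt (e\<^sup>2)" using e by (intro real_sqrt_less_mono) simp
  also have "\<dots> = e" using e by simp
  finally show ?thesis using F(1) Q_def by blast
qed

lemma restr_insert:
  "q \<notin> Q \<Longrightarrow> restr P (insert q Q) f = (\<lambda>i. restr P {q} f i + restr P Q f i)"
  unfolding restr_def by auto

lemma restr_split: "f = (\<lambda>i. restr P (-Q) f i + restr P Q f i)"
  unfolding restr_def by auto

lemma density:
  fixes T S :: "('i \<Rightarrow> complex) \<Rightarrow> ('j \<Rightarrow> complex)" and P :: "'i \<Rightarrow> 'b"
  assumes addT: "\<forall>f\<in>l2 A. \<forall>g\<in>l2 A. T (\<lambda>i. f i + g i) = (\<lambda>j. T f j + T g j)"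
    and addS: "\<forall>f\<in>l2 A. \<forall>g\<in>l2 A. S (\<lambda>i. f i + g i) = (\<lambda>j. S f j + S g j)"
    and bT: "\<forall>f\<in>l2 A. sqn (T f) summable_on UNIV \<and> l2norm (T f) \<le> C * l2norm f"
    and bS: "\<forall>f\<in>l2 A. sqn (S f) summable_on UNIV \<and> l2norm (S f) \<le> D * l2norm f"
    and blk: "\<forall>f\<in>l2 A. \<forall>q. T (restr P {q} f) = S (restr P {q} f)"
    and f: "f \<in> l2 A"
  shows "T f = S f"
proof -
  have fin: "T (restr P Q f) = S (restr P Q f)" if "finite Q" for Q
    using that
  proof (induction Q rule: finite_induct)
    case empty
    have "restr P {} f = restr P {undefined} (\<lambda>_. 0)" by (simp add: restr_def)
    then show ?case using blk l2_zero_fun by metis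
  next
    case (insert q Q)
    have r1: "restr P {q} f \<in> l2 A" "restr P Q f \<in> l2 A" using l2_restrP[OF f] by auto
    have "T (restr P (insert q Q) f) = (\<lambda>j. T (restr P {q} f) j + T (restr P Q f) j)"
      using addT r1 by (simp add: restr_insert[OF insert(2)])
    also have "\<dots> = (\<lambda>j. S (restr P {q} f) j + S (restr P Q f) j)"
      using blk f insert(3) by simp
    also have "\<dots> = S (restr P (insert q Q) f)"
      using addS r1 by (simp add: restr_insert[OF insert(2)])
    finally show ?case .
  qed
  show ?thesis
  proof (rule ext, rule ccontr)
    fix j assume ne: "T f j \<noteq> S f j"
    define d where "d = cmod (T f j - S f j)"
    have d: "d > 0" using ne d_def by simp
    define K where "K = \<bar>C\<bar> + \<bar>D\<bar> + 1"
    have K: "K > 0" unfolding K_def by simp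
    obtain Q where Q: "finite Q" "l2norm (restr P (-Q) f) < d / K"
      using tail_small[OF l2_summ[OF f], of "d / K" P] d K by auto
    define R where "R = restr P (-Q) f"
    define F where "F = restr P Q f"
    have R: "R \<in> l2 A" "F \<in> l2 A" using l2_restrP[OF f] R_def F_def by auto
    have fe: "f = (\<lambda>i. R i + F i)" using restr_split R_def F_def by metis
    have "T f j - S f j = T R j - S R j"
      using addT addS R fin[OF Q(1)] F_def by (subst (1 2) fe) simp
    hence "d \<le> cmod (T R j) + cmod (S R j)" unfolding d_def
      by (metis norm_triangle_ineq4)
    also have "\<dots> \<le> l2norm (T R) + l2norm (S R)"
      using coord_bound[of "T R" j] coord_bound[of "S R" j] bT bS R by (meson add_mono)
    also have "\<dots> \<le> C * l2norm R + D * l2norm R" using bT bS R by (meson add_mono)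
    also have "\<dots> \<le> \<bar>C\<bar> * l2norm R + \<bar>D\<bar> * l2norm R"
      using l2norm_nonneg[of R] by (intro add_mono mult_right_mono) auto
    also have "\<dots> \<le> K * l2norm R" unfolding K_def
      using l2norm_nonneg[of R] by (simp add: algebra_simps)
    also have "\<dots> < K * (d / K)" using Q(2) K R_def by (intro mult_strict_left_mono) auto
    also have "\<dots> = d" using K by simp
    finally show False by simp
  qed
qed




definition pull :: "('j \<Rightarrow> 'i option) \<Rightarrow> ('i \<Rightarrow> complex) \<Rightarrow> 'j \<Rightarrow> complex" where
  "pull \<psi> f = (\<lambda>j. case \<psi> j of None \<Rightarrow> 0 | Some i \<Rightarrow> f i)"

definition pinj :: "('j \<Rightarrow> 'i option) \<Rightarrow> bool" where
  "pinj \<psi> \<longleftrightarrow> (\<forall>j j' i. \<psi> j = Some i \<longrightarrow> \<psi> j' = Some i \<longrightarrow> j = j')"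

definition inv_pair :: "('j \<Rightarrow> 'i option) \<Rightarrow> ('i \<Rightarrow> 'j option) \<Rightarrow> bool" where
  "inv_pair \<psi> \<psi>' \<longleftrightarrow> (\<forall>j i. \<psi> j = Some i \<longleftrightarrow> \<psi>' i = Some j)"

lemma inv_pair_pinj: "inv_pair \<psi> \<psi>' \<Longrightarrow> pinj \<psi>"
  unfolding inv_pair_def pinj_def by (metis option.inject)

lemma inv_pair_sym: "inv_pair \<psi> \<psi>' \<Longrightarrow> inv_pair \<psi>' \<psi>"
  unfolding inv_pair_def by metis

lemma pinj_inj_on: "pinj \<psi> \<Longrightarrow> inj_on (\<lambda>j. the (\<psi> j)) (dom \<psi>)"
  unfolding pinj_def inj_on_def dom_def by force

lemma pinj_image: "(\<lambda>j. the (\<psi> j)) ` (dom \<psi>) = ran \<psi>"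
  unfolding dom_def ran_def by force

lemma pull_comp: "pull \<psi>1 (pull \<psi>2 f) = pull (\<lambda>j. Option.bind (\<psi>1 j) \<psi>2) f"
  unfolding pull_def by (auto split: option.splits)

lemma pull_add: "pull \<psi> (\<lambda>i. f i + g i) = (\<lambda>j. pull \<psi> f j + pull \<psi> g j)"
  unfolding pull_def by (auto split: option.splits)

lemma pull_scale: "pull \<psi> (\<lambda>i. c * f i) = (\<lambda>j. c * pull \<psi> f j)"
  unfolding pull_def by (auto split: option.splits)

lemma pull_sq_eq:
  fixes g :: "'i \<Rightarrow> 'b::{comm_monoid_add,t2_space}"
  assumes "pinj \<psi>"
  shows "infsum (\<lambda>j. case \<psi> j of None \<Rightarrow> 0 | Some i \<Rightarrow> g i) UNIV = infsum g (ran \<psi>)"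
proof -
  have "infsum (\<lambda>j. case \<psi> j of None \<Rightarrow> 0 | Some i \<Rightarrow> g i) UNIV
      = infsum (g \<circ> (\<lambda>j. the (\<psi> j))) (dom \<psi>)"
    by (rule infsum_cong_neutral) (auto simp: dom_def split: option.splits)
  also have "\<dots> = infsum g ((\<lambda>j. the (\<psi> j)) ` dom \<psi>)"
    by (rule infsum_reindex[symmetric, OF pinj_inj_on[OF assms]])
  finally show ?thesis by (simp add: pinj_image)
qed

lemma pull_sq_summ:
  fixes g :: "'i \<Rightarrow> 'b::{comm_monoid_add,t2_space}"
  assumes "pinj \<psi>"
  shows "(\<lambda>j. case \<psi> j of None \<Rightarrow> 0 | Some i \<Rightarrow> g i) summable_on UNIV \<longleftrightarrow> g summable_on (ran \<psi>)"
proof -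
  have "(\<lambda>j. case \<psi> j of None \<Rightarrow> 0 | Some i \<Rightarrow> g i) summable_on UNIV
      \<longleftrightarrow> (g \<circ> (\<lambda>j. the (\<psi> j))) summable_on (dom \<psi>)"
    by (rule summable_on_cong_neutral) (auto simp: dom_def split: option.splits)
  also have "\<dots> \<longleftrightarrow> g summable_on ((\<lambda>j. the (\<psi> j)) ` dom \<psi>)"
    by (rule summable_on_reindex[symmetric, OF pinj_inj_on[OF assms]])
  finally show ?thesis by (simp add: pinj_image)
qed

lemma sqn_pull: "sqn (pull \<psi> f) = (\<lambda>j. case \<psi> j of None \<Rightarrow> 0 | Some i \<Rightarrow> sqn f i)"
  unfolding pull_def by (auto split: option.splits)

lemma pull_summ:
  assumes "pinj \<psi>" "sqn f summable_on UNIV"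
  shows "sqn (pull \<psi> f) summable_on UNIV"
  unfolding sqn_pull pull_sq_summ[OF assms(1)]
  using summable_on_subset_banach[OF assms(2)] by blast

lemma pull_infsum:
  assumes "pinj \<psi>"
  shows "infsum (sqn (pull \<psi> f)) UNIV = infsum (sqn f) (ran \<psi>)"
  unfolding sqn_pull pull_sq_eq[OF assms] ..

lemma pull_norm_le:
  assumes "pinj \<psi>" "sqn f summable_on UNIV"
  shows "l2norm (pull \<psi> f) \<le> l2norm f"
proof -
  have "infsum (sqn f) (ran \<psi>) \<le> infsum (sqn f) UNIV"
    by (rule infsum_mono_neutral[OF summable_on_subset_banach[OF assms(2)] assms(2)]) auto
  thus ?thesis unfolding l2norm_def pull_infsum[OF assms(1)] by simp
qed

lemma pull_l2:
  assumes "pinj \<psi>" "\<forall>j. \<psi> j \<noteq> None \<longrightarrow> j \<in> A" "f \<in> l2 B"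
  shows "pull \<psi> f \<in> l2 A"
  using assms pull_summ[OF assms(1) l2_summ[OF assms(3)]]
  unfolding l2_def pull_def by (auto split: option.splits)

lemma pull_inner:
  assumes ip: "inv_pair \<psi> \<psi>'"
  shows "l2inner (pull \<psi> f) g = l2inner f (pull \<psi>' g)"
proof -
  have pj: "pinj \<psi>" using inv_pair_pinj[OF ip] .
  have "l2inner (pull \<psi> f) g = infsum (\<lambda>j. cnj (f (the (\<psi> j))) * g j) (dom \<psi>)"
    unfolding l2inner_def pull_def
    by (rule infsum_cong_neutral) (auto simp: dom_def split: option.splits)
  also have "\<dots> = infsum ((\<lambda>i. cnj (f i) * g (the (\<psi>' i))) \<circ> (\<lambda>j. the (\<psi> j))) (dom \<psi>)"
  proof (rule infsum_cong)
    fix j assume "j \<in> dom \<psi>"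
    then obtain i where "\<psi> j = Some i" by auto
    hence "\<psi>' i = Some j" using ip unfolding inv_pair_def by auto
    thus "cnj (f (the (\<psi> j))) * g j = ((\<lambda>i. cnj (f i) * g (the (\<psi>' i))) \<circ> (\<lambda>j. the (\<psi> j))) j"
      using \<open>\<psi> j = Some i\<close> by simp
  qed
  also have "\<dots> = infsum (\<lambda>i. cnj (f i) * g (the (\<psi>' i))) (ran \<psi>)"
    by (subst infsum_reindex[symmetric, OF pinj_inj_on[OF pj]]) (simp add: pinj_image)
  also have "\<dots> = l2inner f (pull \<psi>' g)"
    unfolding l2inner_def pull_def
    by (rule infsum_cong_neutral)
       (use ip in \<open>auto simp: ran_def inv_pair_def split: option.splits\<close>)
  finally show ?thesis .
qed

definition delta :: "'i \<Rightarrow> 'i \<Rightarrow> complex" where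
  "delta j = (\<lambda>i. if i = j then 1 else 0)"

lemma l2inner_delta: "l2inner (delta j) g = g j"
proof -
  have "l2inner (delta j) g = infsum (\<lambda>i. cnj (delta j i) * g i) {j}"
    unfolding l2inner_def by (rule infsum_cong_neutral) (auto simp: delta_def)
  thus ?thesis by (simp add: delta_def)
qed

lemma delta_l2: "j \<in> A \<Longrightarrow> delta j \<in> l2 A"
proof -
  assume j: "j \<in> A"
  have "sqn (delta j) summable_on UNIV \<longleftrightarrow> sqn (delta j) summable_on {j}"
    by (rule summable_on_cong_neutral) (auto simp: delta_def)
  thus ?thesis using j unfolding l2_def by (auto simp: delta_def)
qed

lemma l2_ext:
  assumes "f \<in> l2 A" "g \<in> l2 A" "\<And>j. j \<in> A \<Longrightarrow> f j = g j"
  shows "f = g"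
  using assms unfolding l2_def by fastforce

lemma adj_pull:
  assumes ip: "inv_pair \<psi> \<psi>'"
    and d1: "\<forall>j. \<psi> j \<noteq> None \<longrightarrow> j \<in> A" and d2: "\<forall>j. \<psi>' j \<noteq> None \<longrightarrow> j \<in> A"
    and T: "\<forall>f\<in>l2 A. T f = pull \<psi> f"
    and g: "g \<in> l2 A"
  shows "adj A T g = pull \<psi>' g"
proof -
  let ?P = "\<lambda>T'. (\<forall>g\<in>l2 A. T' g \<in> l2 A) \<and>
       (\<forall>f\<in>l2 A. \<forall>g\<in>l2 A. l2inner (T f) g = l2inner f (T' g))"
  have pj': "pinj \<psi>'" using inv_pair_pinj[OF inv_pair_sym[OF ip]] .
  have "?P (pull \<psi>')"
    using pull_l2[OF pj' d2] T pull_inner[OF ip] by auto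
  hence P: "?P (adj A T)" unfolding adj_def by (rule someI[where P = ?P])
  show ?thesis
  proof (rule l2_ext)
    show "adj A T g \<in> l2 A" using P g by blast
    show "pull \<psi>' g \<in> l2 A" using pull_l2[OF pj' d2 g] .
    fix j assume j: "j \<in> A"
    have "adj A T g j = l2inner (delta j) (adj A T g)" by (simp add: l2inner_delta)
    also have "\<dots> = l2inner (T (delta j)) g" using P g delta_l2[OF j] by auto
    also have "\<dots> = l2inner (delta j) (pull \<psi>' g)"
      using T delta_l2[OF j] pull_inner[OF ip] by auto
    also have "\<dots> = pull \<psi>' g j" by (simp add: l2inner_delta)
    finally show "adj A T g j = pull \<psi>' g j" .
  qed
qed




definition pinvm :: "('j \<Rightarrow> 'i option) \<Rightarrow> 'i \<Rightarrow> 'j option" where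
  "pinvm \<tau> m = (if \<exists>n. \<tau> n = Some m then Some (THE n. \<tau> n = Some m) else None)"

lemma pinvm_inv_pair: "pinj \<tau> \<Longrightarrow> inv_pair \<tau> (pinvm \<tau>)"
  unfolding inv_pair_def pinvm_def pinj_def
  by (auto intro: the_equality[symmetric] theI2)

definition sig :: "('k \<Rightarrow> 'k \<Rightarrow> (nat \<Rightarrow> complex) \<Rightarrow> (nat \<Rightarrow> complex)) \<Rightarrow> 'k \<Rightarrow> 'k \<Rightarrow> nat \<Rightarrow> nat" where
  "sig gam b a n = (SOME m. gam b a (ebasis n) = ebasis m)"

lemma ebasis_delta: "ebasis n = delta n"
  unfolding ebasis_def delta_def by auto

lemma ebasis_l2: "ebasis n \<in> l2 UNIV"
  by (simp add: ebasis_delta delta_l2)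

context
  fixes gam :: "'k::order \<Rightarrow> 'k \<Rightarrow> (nat \<Rightarrow> complex) \<Rightarrow> (nat \<Rightarrow> complex)" and a b :: 'k
  assumes gs: "gamma_system gam" and ab: "a \<le> b"
begin

lemma gs_iso: "h \<in> l2 UNIV \<Longrightarrow> gam b a h \<in> l2 UNIV \<and> l2norm (gam b a h) = l2norm h"
  using gs ab unfolding gamma_system_def by blast

lemma gs_add: "h \<in> l2 UNIV \<Longrightarrow> k \<in> l2 UNIV \<Longrightarrow>
   gam b a (\<lambda>n. h n + k n) = (\<lambda>n. gam b a h n + gam b a k n)"
  using gs ab unfolding gamma_system_def by blast

lemma gs_scale: "h \<in> l2 UNIV \<Longrightarrow> gam b a (\<lambda>n. c * h n) = (\<lambda>n. c * gam b a h n)"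
  using gs ab unfolding gamma_system_def by blast

lemma gs_basis: "gam b a (ebasis n) = ebasis (sig gam b a n)"
proof -
  have "\<exists>m. gam b a (ebasis n) = ebasis m" using gs ab unfolding gamma_system_def by blast
  thus ?thesis unfolding sig_def by (rule someI_ex)
qed

lemma sig_inj: "sig gam b a n = sig gam b a n' \<Longrightarrow> n = n'"
proof (rule ccontr)
  assume eq: "sig gam b a n = sig gam b a n'" and ne: "n \<noteq> n'"
  define d where "d = (\<lambda>i. ebasis n i + (-1) * ebasis n' i)"
  have dl: "d \<in> l2 UNIV" unfolding d_def by (intro l2_add l2_scale ebasis_l2)
  have "gam b a d = (\<lambda>i. gam b a (ebasis n) i + gam b a (\<lambda>i. (-1) * ebasis n' i) i)"
    unfolding d_def by (rule gs_add[OF ebasis_l2 l2_scale[OF ebasis_l2]])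
  also have "\<dots> = (\<lambda>i. gam b a (ebasis n) i + (-1) * gam b a (ebasis n') i)"
    by (simp only: gs_scale[OF ebasis_l2])
  finally have "gam b a d = (\<lambda>i. gam b a (ebasis n) i + (-1) * gam b a (ebasis n') i)" .
  hence "gam b a d = (\<lambda>_. 0)" using eq by (simp add: gs_basis)
  hence "l2norm d = 0" using gs_iso[OF dl] by (simp add: l2norm_def)
  hence "d = (\<lambda>_. 0)" using l2norm_eq0 l2_summ[OF dl] by blast
  hence "d n = 0" by simp
  thus False using ne unfolding d_def ebasis_def by simp
qed

definition isig :: "nat \<Rightarrow> nat option" where
  "isig = pinvm (\<lambda>n. Some (sig gam b a n))"

lemma sig_pinj: "pinj (\<lambda>n. Some (sig gam b a n))"
  unfolding pinj_def using sig_inj by auto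

lemma isig_pair: "inv_pair (\<lambda>n. Some (sig gam b a n)) isig"
  unfolding isig_def by (rule pinvm_inv_pair[OF sig_pinj])

lemma isig_iff: "isig m = Some n \<longleftrightarrow> sig gam b a n = m"
  using isig_pair unfolding inv_pair_def by auto

lemma isig_pinj: "pinj isig"
  using inv_pair_pinj[OF inv_pair_sym[OF isig_pair]] .

lemma gam_pull: "h \<in> l2 UNIV \<Longrightarrow> gam b a h = pull isig h"
proof (rule density[where T = "gam b a" and S = "pull isig" and A = UNIV and P = id
      and C = 1 and D = 1])
  show "\<forall>f\<in>l2 UNIV. \<forall>g\<in>l2 UNIV. gam b a (\<lambda>i. f i + g i) = (\<lambda>j. gam b a f j + gam b a g j)"
    using gs_add by blast
  show "\<forall>f\<in>l2 UNIV. \<forall>g\<in>l2 UNIV. pull isig (\<lambda>i. f i + g i) = (\<lambda>j. pull isig f j + pull isig g j)"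
    by (simp add: pull_add)
  show "\<forall>f\<in>l2 UNIV. sqn (gam b a f) summable_on UNIV \<and> l2norm (gam b a f) \<le> 1 * l2norm f"
    using gs_iso l2_summ by fastforce
  show "\<forall>f\<in>l2 UNIV. sqn (pull isig f) summable_on UNIV \<and> l2norm (pull isig f) \<le> 1 * l2norm f"
    using pull_summ[OF isig_pinj] pull_norm_le[OF isig_pinj] l2_summ by fastforce
  show "\<forall>f\<in>l2 UNIV. \<forall>q. gam b a (restr id {q} f) = pull isig (restr id {q} f)"
  proof (intro ballI allI)
    fix f :: "nat \<Rightarrow> complex" and q assume f: "f \<in> l2 UNIV"
    have r: "restr id {q} f = (\<lambda>m. f q * ebasis q m)"
      unfolding restr_def ebasis_def by auto
    have "gam b a (restr id {q} f) = (\<lambda>m. f q * ebasis (sig gam b a q) m)"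
      unfolding r by (simp add: gs_scale ebasis_l2 gs_basis)
    also have "\<dots> = pull isig (restr id {q} f)"
    proof
      fix m
      show "f q * ebasis (sig gam b a q) m = pull isig (restr id {q} f) m"
      proof (cases "isig m")
        case None
        then show ?thesis unfolding pull_def ebasis_def
          using isig_iff[of m q] by auto
      next
        case (Some n)
        hence sn: "sig gam b a n = m" using isig_iff by simp
        show ?thesis
        proof (cases "n = q")
          case True
          then show ?thesis using Some sn unfolding pull_def ebasis_def restr_def by simp
        next
          case False
          hence "m \<noteq> sig gam b a q" using sn sig_inj by blast
          then show ?thesis using Some False unfolding pull_def ebasis_def restr_def by simp
        qed
      qed
    qed
    finally show "gam b a (restr id {q} f) = pull isig (restr id {q} f)" .
  qed
qed

end




lemma pwf_Cons:
  "pwf (x # xs) \<longleftrightarrow> evalid x \<and> (xs = [] \<or> (pwf xs \<and> estart x = pend xs))"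
proof
  assume p: "pwf (x # xs)"
  show "evalid x \<and> (xs = [] \<or> (pwf xs \<and> estart x = pend xs))"
  proof (cases xs)
    case Nil then show ?thesis using p by (simp add: pwf_def)
  next
    case (Cons y ys)
    have "estart x = pend xs" using p Cons unfolding pwf_def pend_def
      by (metis length_Cons nth_Cons_0 nth_Cons_Suc zero_less_Suc Suc_less_eq list.sel(1))
    moreover have "pwf xs"
    proof -
      have "\<forall>i. Suc i < length xs \<longrightarrow> estart (xs ! i) = eend (xs ! Suc i)"
      proof (intro allI impI)
        fix i assume "Suc i < length xs"
        hence "Suc (Suc i) < length (x # xs)" by simp
        hence "estart ((x # xs) ! Suc i) = eend ((x # xs) ! Suc (Suc i))"
          using p unfolding pwf_def by blast
        thus "estart (xs ! i) = eend (xs ! Suc i)" by simp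
      qed
      thus ?thesis using p Cons unfolding pwf_def by auto
    qed
    ultimately show ?thesis using p by (simp add: pwf_def)
  qed
next
  assume r: "evalid x \<and> (xs = [] \<or> (pwf xs \<and> estart x = pend xs))"
  show "pwf (x # xs)"
  proof (cases xs)
    case Nil then show ?thesis using r by (simp add: pwf_def)
  next
    case (Cons y ys)
    have "\<forall>i. Suc i < length (x # xs) \<longrightarrow> estart ((x # xs) ! i) = eend ((x # xs) ! Suc i)"
    proof (intro allI impI)
      fix i assume "Suc i < length (x # xs)"
      then show "estart ((x # xs) ! i) = eend ((x # xs) ! Suc i)"
        using r Cons unfolding pwf_def pend_def
        by (cases i) auto
    qed
    then show ?thesis using r Cons unfolding pwf_def by auto
  qed
qed

lemma pwf_single[simp]: "pwf [x] \<longleftrightarrow> evalid x"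
  by (simp add: pwf_Cons)

lemma pstart_Cons: "xs \<noteq> [] \<Longrightarrow> pstart (x # xs) = pstart xs"
  by (simp add: pstart_def)

lemma pend_Cons[simp]: "pend (x # xs) = eend x"
  by (simp add: pend_def)

lemma pstart_single[simp]: "pstart [x] = estart x"
  by (simp add: pstart_def)

lemma pwf_nonempty: "pwf xs \<Longrightarrow> xs \<noteq> []"
  by (simp add: pwf_def)

lemma pwf_append:
  "pwf p \<Longrightarrow> pwf q \<Longrightarrow> pstart p = pend q \<Longrightarrow>
     pwf (p @ q) \<and> pstart (p @ q) = pstart q \<and> pend (p @ q) = pend p"
proof (induction p)
  case Nil then show ?case by (simp add: pwf_def)
next
  case (Cons x p)
  show ?case
  proof (cases "p = []")
    case True
    then show ?thesis using Cons.prems pwf_nonempty[of q]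
      by (auto simp: pwf_Cons pstart_def)
  next
    case False
    have "pwf p" "estart x = pend p" "evalid x" using Cons.prems(1) False by (auto simp: pwf_Cons)
    moreover have "pstart p = pend q" using Cons.prems(3) False by (simp add: pstart_Cons)
    ultimately have ih: "pwf (p @ q) \<and> pstart (p @ q) = pstart q \<and> pend (p @ q) = pend p"
      using Cons.IH Cons.prems by blast
    then show ?thesis using \<open>estart x = pend p\<close> \<open>evalid x\<close> False pwf_nonempty[of q] Cons.prems(2)
      by (auto simp: pwf_Cons pstart_def)
  qed
qed

lemma peq_wf: "peq p q \<Longrightarrow> pwf p \<and> pwf q \<and> pstart p = pstart q \<and> pend p = pend q"
proof (induction rule: peq.induct)
  case (peq_cat p p' q q')
  then show ?case using pwf_append[of p q] pwf_append[of p' q'] by auto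
qed (auto simp: pwf_Cons pstart_def)

lemma peq_refl': "pwf p \<Longrightarrow> peq p p" by (rule peq_refl)

lemma pclass_eq: "peq x y \<Longrightarrow> pclass x = pclass y"
  unfolding pclass_def by (auto intro: peq_trans peq_sym)

lemma pre_pclass:
  assumes "pwf (e # x0)" "x0 \<noteq> []"
  shows "pre e (pclass x0) = pclass (e # x0)"
proof -
  have x0: "pwf x0" "estart e = pend x0" "evalid e" using assms by (auto simp: pwf_Cons)
  have ce: "peq (e # x0) (e # xs)" if "peq x0 xs" for xs
    using peq_cat[OF peq_refl[of "[e]"] that] x0 by simp
  show ?thesis unfolding pre_def pclass_def
  proof safe
    fix ys xs assume "peq x0 xs" "peq (e # xs) ys"
    thus "peq (e # x0) ys" using ce peq_trans by blast
  next
    fix ys assume "peq (e # x0) ys"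
    thus "\<exists>xs\<in>{ys. peq x0 ys}. peq (e # xs) ys" using peq_refl[OF x0(1)] by blast
  qed
qed

lemma Spaths_elim:
  assumes "r \<in> Spaths b"
  obtains r0 where "pwf r0" "pend r0 = b" "r = pclass r0"
  using assms unfolding Spaths_def by blast

lemma Spaths_intro: "pwf r0 \<Longrightarrow> pend r0 = b \<Longrightarrow> pclass r0 \<in> Spaths b"
  unfolding Spaths_def by blast

lemma peq_unit:
  assumes "pwf r0" "pend r0 = c"
  shows "peq (Up c c # r0) r0"
proof -
  obtain x r' where r0: "r0 = x # r'" using pwf_nonempty[OF assms(1)] by (cases r0) auto
  have x: "evalid x" "eend x = c" "r' = [] \<or> (pwf r' \<and> estart x = pend r')"
    using assms r0 by (auto simp: pwf_Cons)
  have base: "peq [Up c c, x] [x]"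
  proof (cases x)
    case (Up c' d)
    then have "c' = c" "c \<le> d" using x by auto
    then show ?thesis using Up peq_up[of c c d] by simp
  next
    case (Dn c' d)
    then have cc: "c' = c" "d \<le> c" using x by auto
    have "peq ([Up c c] @ [Dn c d]) ([Dn c c] @ [Dn c d])"
      by (rule peq_cat[OF peq_triv peq_refl]) (use cc in auto)
    moreover have "peq [Dn c c, Dn c d] [Dn c d]" using peq_dn[of d c c] cc by simp
    ultimately show ?thesis using Dn cc by (auto intro: peq_trans)
  qed
  show ?thesis
  proof (cases "r' = []")
    case True then show ?thesis using base r0 by simp
  next
    case False
    then have "pwf r'" "estart x = pend r'" using x by auto
    then have "peq ([Up c c, x] @ r') ([x] @ r')"
      by (intro peq_cat[OF base peq_refl]) (auto simp: pstart_def)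
    then show ?thesis using r0 by simp
  qed
qed

definition bijpair :: "'a set \<Rightarrow> 'b set \<Rightarrow> ('a \<Rightarrow> 'b) \<Rightarrow> ('b \<Rightarrow> 'a) \<Rightarrow> bool" where
  "bijpair E S P Q \<longleftrightarrow> (\<forall>r\<in>E. P r \<in> S \<and> Q (P r) = r) \<and> (\<forall>s\<in>S. Q s \<in> E \<and> P (Q s) = s)"

lemma bijpair_sym: "bijpair E S P Q \<Longrightarrow> bijpair S E Q P"
  unfolding bijpair_def by auto

lemma bijpair_comp: "bijpair E M P1 Q1 \<Longrightarrow> bijpair M S P2 Q2 \<Longrightarrow> bijpair E S (P2 \<circ> P1) (Q1 \<circ> Q2)"
  unfolding bijpair_def by auto

lemma pre_cancel1:
  assumes ab: "a \<le> b" and "r \<in> Spaths b"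
  shows "pre (Up a b) r \<in> Spaths a \<and> pre (Dn b a) (pre (Up a b) r) = r"
proof -
  obtain r0 where r0: "pwf r0" "pend r0 = b" "r = pclass r0" using assms(2) by (rule Spaths_elim)
  have w1: "pwf (Up a b # r0)" using r0 ab by (simp add: pwf_Cons pwf_nonempty)
  have e1: "pre (Up a b) r = pclass (Up a b # r0)"
    using pre_pclass[OF w1 pwf_nonempty[OF r0(1)]] r0 by simp
  have w2: "pwf (Dn b a # Up a b # r0)" using w1 ab by (simp add: pwf_Cons)
  have e2: "pre (Dn b a) (pre (Up a b) r) = pclass (Dn b a # Up a b # r0)"
    using pre_pclass[OF w2] e1 by simp
  have "peq ([Dn b a, Up a b] @ r0) ([Up b b] @ r0)"
    by (rule peq_cat[OF peq_dnup[OF ab] peq_refl[OF r0(1)]]) (simp add: pstart_def r0)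
  then have "peq (Dn b a # Up a b # r0) r0" using peq_unit[OF r0(1,2)] peq_trans by auto
  then show ?thesis using e2 e1 r0 pclass_eq Spaths_intro[OF w1] by simp
qed

lemma pre_cancel2:
  assumes ab: "a \<le> b" and "s \<in> Spaths a"
  shows "pre (Dn b a) s \<in> Spaths b \<and> pre (Up a b) (pre (Dn b a) s) = s"
proof -
  obtain s0 where s0: "pwf s0" "pend s0 = a" "s = pclass s0" using assms(2) by (rule Spaths_elim)
  have w1: "pwf (Dn b a # s0)" using s0 ab by (simp add: pwf_Cons pwf_nonempty)
  have e1: "pre (Dn b a) s = pclass (Dn b a # s0)"
    using pre_pclass[OF w1 pwf_nonempty[OF s0(1)]] s0 by simp
  have w2: "pwf (Up a b # Dn b a # s0)" using w1 ab by (simp add: pwf_Cons)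
  have e2: "pre (Up a b) (pre (Dn b a) s) = pclass (Up a b # Dn b a # s0)"
    using pre_pclass[OF w2] e1 by simp
  have "peq ([Up a b, Dn b a] @ s0) ([Up a a] @ s0)"
    by (rule peq_cat[OF peq_updn[OF ab] peq_refl[OF s0(1)]]) (simp add: pstart_def s0)
  then have "peq (Up a b # Dn b a # s0) s0" using peq_unit[OF s0(1,2)] peq_trans by auto
  then show ?thesis using e2 e1 s0 pclass_eq Spaths_intro[OF w1] by simp
qed

lemma pre_bij:
  assumes ab: "a \<le> b"
  shows "bijpair (Spaths b) (Spaths a) (pre (Up a b)) (pre (Dn b a))"
  unfolding bijpair_def using pre_cancel1[OF ab] pre_cancel2[OF ab] by blast

lemma Spaths_nonempty: "pclass [Up a a] \<in> Spaths a"
  by (rule Spaths_intro) auto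

lemma evalid_einv: "evalid (einv x) = evalid x"
  by (cases x) auto

lemma einv_start_end: "estart (einv x) = eend x" "eend (einv x) = estart x"
  by (cases x, auto)+

lemma pinv_Cons: "pinv (x # xs) = pinv xs @ [einv x]"
  by (simp add: pinv_def)

lemma pinv_wf: "pwf xs \<Longrightarrow> pwf (pinv xs) \<and> pstart (pinv xs) = pend xs \<and> pend (pinv xs) = pstart xs"
proof (induction xs)
  case Nil then show ?case by (simp add: pwf_def)
next
  case (Cons x xs)
  show ?case
  proof (cases "xs = []")
    case True then show ?thesis using Cons.prems
      by (simp add: pinv_def evalid_einv einv_start_end)
  next
    case False
    then have h: "pwf xs" "estart x = pend xs" "evalid x" using Cons.prems by (auto simp: pwf_Cons)
    then have ih: "pwf (pinv xs)" "pstart (pinv xs) = pend xs" "pend (pinv xs) = pstart xs"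
      using Cons.IH by auto
    have w: "pwf [einv x]" by (simp add: evalid_einv h)
    have "pwf (pinv xs @ [einv x]) \<and> pstart (pinv xs @ [einv x]) = pstart [einv x]
          \<and> pend (pinv xs @ [einv x]) = pend (pinv xs)"
      by (rule pwf_append[OF ih(1) w]) (simp add: ih h einv_start_end)
    then show ?thesis using ih False by (simp add: pinv_Cons einv_start_end pstart_Cons)
  qed
qed




type_synonym 'k idx = "'k \<times> nat \<times> 'k elem list set"

definition Psi :: "'k::order \<Rightarrow> 'k \<Rightarrow> (nat \<Rightarrow> nat option) \<Rightarrow> ('k elem list set \<Rightarrow> 'k elem list set)
    \<Rightarrow> 'k idx \<Rightarrow> 'k idx option" where
  "Psi s e \<tau> P = (\<lambda>(c, m, r). if c = e \<and> r \<in> Spaths e then map_option (\<lambda>n. (s, n, P r)) (\<tau> m) else None)"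

lemma Psi_Some: "Psi s e \<tau> P (c, m, r) = Some (c', n, q) \<longleftrightarrow>
   c = e \<and> r \<in> Spaths e \<and> \<tau> m = Some n \<and> c' = s \<and> q = P r"
  unfolding Psi_def by auto

lemma Psi_dom: "\<forall>j. Psi s e \<tau> P j \<noteq> None \<longrightarrow> j \<in> Bidx"
  unfolding Psi_def Bidx_def by (auto split: if_splits)

lemma Psi_pinj:
  assumes "pinj \<tau>" "bijpair (Spaths e) S P Q"
  shows "pinj (Psi s e \<tau> P)"
  unfolding pinj_def
proof (intro allI impI)
  fix j j' i assume h: "Psi s e \<tau> P j = Some i" "Psi s e \<tau> P j' = Some i"
  obtain c m r where j: "j = (c, m, r)" by (cases j) auto
  obtain c' m' r' where j': "j' = (c', m', r')" by (cases j') auto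
  obtain c1 n q where i: "i = (c1, n, q)" by (cases i) auto
  from h j j' i have "c = e" "r \<in> Spaths e" "\<tau> m = Some n" "q = P r"
       "c' = e" "r' \<in> Spaths e" "\<tau> m' = Some n" "q = P r'"
    by (auto simp: Psi_Some)
  moreover have "m = m'" using assms(1) calculation unfolding pinj_def by blast
  moreover have "r = r'" using assms(2) calculation unfolding bijpair_def by metis
  ultimately show "j = j'" using j j' by simp
qed

lemma Psi_inv_pair:
  fixes e :: "'k::order"
  assumes "inv_pair \<tau> \<tau>'" "bijpair (Spaths e) (Spaths s) P Q"
  shows "inv_pair (Psi s e \<tau> P) (Psi e s \<tau>' Q)"
  unfolding inv_pair_def
proof (intro allI)
  fix j i :: "'k idx"
  obtain c m r where j: "j = (c, m, r)" by (cases j) auto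
  obtain c1 n q where i: "i = (c1, n, q)" by (cases i) auto
  show "(Psi s e \<tau> P j = Some i) = (Psi e s \<tau>' Q i = Some j)"
    unfolding j i Psi_Some using assms unfolding inv_pair_def bijpair_def by metis
qed

lemma Psi_comp:
  fixes e :: "'k::order"
  assumes "\<forall>r\<in>Spaths e. P1 r \<in> Spaths m"
  shows "(\<lambda>j. Option.bind (Psi m e \<tau>1 P1 j) (Psi s m \<tau>2 P2))
       = Psi s e (\<lambda>k. Option.bind (\<tau>1 k) \<tau>2) (P2 \<circ> P1)"
proof
  fix j :: "'k idx"
  obtain c k r where j: "j = (c, k, r)" by (cases j) auto
  show "Option.bind (Psi m e \<tau>1 P1 j) (Psi s m \<tau>2 P2) = Psi s e (\<lambda>k. Option.bind (\<tau>1 k) \<tau>2) (P2 \<circ> P1) j"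
    unfolding j Psi_def using assms by (cases "\<tau>1 k") (auto simp: map_option_case split: option.splits)
qed

lemma ran_Psi:
  assumes "bijpair (Spaths e) (Spaths s) P Q"
  shows "(s', k, q) \<in> ran (Psi s e \<tau> P) \<longleftrightarrow> s' = s \<and> k \<in> ran \<tau> \<and> q \<in> Spaths s"
proof
  assume "(s', k, q) \<in> ran (Psi s e \<tau> P)"
  then obtain j where "Psi s e \<tau> P j = Some (s', k, q)" unfolding ran_def by blast
  then obtain c m r where "Psi s e \<tau> P (c, m, r) = Some (s', k, q)" by (cases j) auto
  then show "s' = s \<and> k \<in> ran \<tau> \<and> q \<in> Spaths s"
    using assms unfolding Psi_Some bijpair_def ran_def by auto
next
  assume h: "s' = s \<and> k \<in> ran \<tau> \<and> q \<in> Spaths s"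
  then obtain m where m: "\<tau> m = Some k" unfolding ran_def by blast
  have "Psi s e \<tau> P (e, m, Q q) = Some (s', k, q)"
    unfolding Psi_Some using h m assms unfolding bijpair_def by auto
  then show "(s', k, q) \<in> ran (Psi s e \<tau> P)" unfolding ran_def by blast
qed

lemma slice_summ:
  assumes "sqn f summable_on UNIV"
  shows "sqn (\<lambda>m. f (a, m, q)) summable_on UNIV"
proof -
  have inj: "inj_on (\<lambda>m. (a, m, q)) UNIV" by (auto simp: inj_on_def)
  have "sqn f summable_on (range (\<lambda>m. (a, m, q)))" using summable_on_subset_banach[OF assms] by blast
  hence "(sqn f \<circ> (\<lambda>m. (a, m, q))) summable_on UNIV" using summable_on_reindex[OF inj] by blast
  thus ?thesis by (simp add: o_def)
qed

lemma slice_l2: "f \<in> l2H \<Longrightarrow> (\<lambda>m. f (a, m, q)) \<in> l2 UNIV"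
  unfolding l2_def using slice_summ by auto

lemma tens_sq: "sqn (tens a h s) = (\<lambda>(b, n, q). if b = a \<and> q = s then sqn h n else 0)"
  unfolding tens_def by auto

lemma tens_l2:
  assumes h: "h \<in> l2 UNIV" and s: "s \<in> Spaths a"
  shows "tens a h s \<in> l2H"
proof -
  have inj: "inj_on (\<lambda>m. (a, m, s)) UNIV" by (auto simp: inj_on_def)
  have "sqn (tens a h s) summable_on UNIV \<longleftrightarrow> sqn (tens a h s) summable_on range (\<lambda>m. (a, m, s))"
    by (rule summable_on_cong_neutral) (auto simp: tens_def)
  also have "\<dots> \<longleftrightarrow> (sqn (tens a h s) \<circ> (\<lambda>m. (a, m, s))) summable_on UNIV"
    by (rule summable_on_reindex[OF inj])
  also have "\<dots> \<longleftrightarrow> sqn h summable_on UNIV" by (simp add: o_def tens_def)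
  finally show ?thesis using h s unfolding l2_def Bidx_def by (auto simp: tens_def)
qed




lemma bijpair_iff:
  assumes "bijpair E S P Q" "p \<in> S"
  shows "(r \<in> E \<and> P r = p) \<longleftrightarrow> r = Q p"
  using assms unfolding bijpair_def by metis

lemma chi_Dn:
  assumes gs: "gamma_system gam" and ab: "a \<le> b" and f: "f \<in> l2H"
  shows "chi gam a b f = pull (Psi a b (isig gam a b) (pre (Up a b))) f"
proof -
  define \<psi> where "\<psi> = Psi a b (isig gam a b) (pre (Up a b))"
  have bp: "bijpair (Spaths b) (Spaths a) (pre (Up a b)) (pre (Dn b a))" by (rule pre_bij[OF ab])
  have pj: "pinj \<psi>" unfolding \<psi>_def by (rule Psi_pinj[OF isig_pinj[OF gs ab] bp])
  have dom: "\<forall>j. \<psi> j \<noteq> None \<longrightarrow> j \<in> Bidx" unfolding \<psi>_def by (rule Psi_dom)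
  have vanS: "pull \<psi> g = (\<lambda>_. 0)" if "\<forall>n q. g (a, n, q) = 0" for g
  proof
    fix j :: "'a idx"
    obtain c m r where j: "j = (c, m, r)" by (cases j) auto
    show "pull \<psi> g j = 0" unfolding pull_def \<psi>_def j Psi_def using that
      by (auto split: option.splits)
  qed
  have tS: "pull \<psi> (tens a h p) = tens b (gam b a h) (pre (Dn b a) p)"
    if h: "h \<in> l2 UNIV" and p: "p \<in> Spaths a" for h p
  proof
    fix j :: "'a idx"
    obtain c m r where j: "j = (c, m, r)" by (cases j) auto
    have iff: "(r \<in> Spaths b \<and> pre (Up a b) r = p) \<longleftrightarrow> r = pre (Dn b a) p"
      by (rule bijpair_iff[OF bp p])
    show "pull \<psi> (tens a h p) j = tens b (gam b a h) (pre (Dn b a) p) j"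
      unfolding gam_pull[OF gs ab h] unfolding j pull_def \<psi>_def Psi_def tens_def
      using iff by (auto split: option.splits)
  qed
  have isS: "is_chi gam a b (pull \<psi>)"
    unfolding is_chi_def bounded_op_def
  proof (intro conjI ballI allI impI)
    show "pull \<psi> g \<in> l2H" if "g \<in> l2H" for g using pull_l2[OF pj dom that] .
    show "\<exists>C. \<forall>f\<in>l2H. l2norm (pull \<psi> f) \<le> C * l2norm f"
      using pull_norm_le[OF pj] l2_summ by (intro exI[of _ 1]) auto
  qed (auto simp: pull_add pull_scale vanS tS)
  have isT: "is_chi gam a b (chi gam a b)" unfolding chi_def using isS by (rule someI[where P = "is_chi gam a b"])
  obtain C where bT: "\<forall>f\<in>l2H. l2norm (chi gam a b f) \<le> C * l2norm f"
    using isT unfolding is_chi_def bounded_op_def by blast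
  have van: "T g = (\<lambda>_. 0)" if "is_chi gam a b T" "g \<in> l2H" "\<forall>n q. g (a, n, q) = 0" for T g
    using that unfolding is_chi_def by blast
  have ten: "T (tens a h p) = tens b (gam b a h) (pre (Dn b a) p)"
    if "is_chi gam a b T" "h \<in> l2 UNIV" "p \<in> Spaths a" for T h p
    using that unfolding is_chi_def by blast
  show ?thesis unfolding \<psi>_def[symmetric]
  proof (rule density[where T = "chi gam a b" and S = "pull \<psi>" and A = Bidx and P = "\<lambda>(c, m, q). (c, q)" and C = C and D = 1])
    show "\<forall>f\<in>l2H. \<forall>g\<in>l2H. chi gam a b (\<lambda>i. f i + g i) = (\<lambda>j. chi gam a b f j + chi gam a b g j)"
      using isT unfolding is_chi_def bounded_op_def by blast
    show "\<forall>f\<in>l2H. \<forall>g\<in>l2H. pull \<psi> (\<lambda>i. f i + g i) = (\<lambda>j. pull \<psi> f j + pull \<psi> g j)"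
      by (simp add: pull_add)
    show "\<forall>f\<in>l2H. sqn (chi gam a b f) summable_on UNIV \<and> l2norm (chi gam a b f) \<le> C * l2norm f"
      using isT bT unfolding is_chi_def bounded_op_def by (auto intro: l2_summ)
    show "\<forall>f\<in>l2H. sqn (pull \<psi> f) summable_on UNIV \<and> l2norm (pull \<psi> f) \<le> 1 * l2norm f"
      using pull_summ[OF pj] pull_norm_le[OF pj] l2_summ by fastforce
    show "\<forall>g\<in>l2H. \<forall>q. chi gam a b (restr (\<lambda>(c, m, q). (c, q)) {q} g) = pull \<psi> (restr (\<lambda>(c, m, q). (c, q)) {q} g)"
    proof (intro ballI allI)
      fix g :: "'a idx \<Rightarrow> complex" and q :: "'a \<times> 'a elem list set"
      assume g: "g \<in> l2H"
      obtain c qq where q: "q = (c, qq)" by (cases q) auto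
      define R where "R = restr (\<lambda>(c, m, q). (c, q)) {q} g"
      have R: "R \<in> l2H" unfolding R_def by (rule l2_restrP[OF g])
      show "chi gam a b R = pull \<psi> R" unfolding R_def[symmetric]
      proof (cases "c = a \<and> qq \<in> Spaths a")
        case True
        have "R = tens a (\<lambda>m. g (a, m, qq)) qq"
          unfolding R_def restr_def tens_def q using True by auto
        then show ?thesis using ten[OF isT slice_l2[OF g]] tS[OF slice_l2[OF g]] True by simp
      next
        case False
        have z: "\<forall>n q'. R (a, n, q') = 0"
        proof (intro allI)
          fix n q'
          show "R (a, n, q') = 0"
          proof (cases "c = a \<and> q' = qq")
            case True
            then have "(a, n, q') \<notin> Bidx" using False by (auto simp: Bidx_def)
            then show ?thesis using l2_zero_out[OF R] by blast
          next
            case False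
            then show ?thesis unfolding R_def restr_def q by auto
          qed
        qed
        show ?thesis using van[OF isT R z] vanS[OF z] by simp
      qed
    qed
  qed (rule f)
qed




lemma chi_Up:
  assumes gs: "gamma_system gam" and ba: "b \<le> a" and g: "g \<in> l2H"
  shows "adj Bidx (chi gam b a) g = pull (Psi a b (\<lambda>n. Some (sig gam a b n)) (pre (Dn a b))) g"
proof -
  have ip: "inv_pair (Psi b a (isig gam b a) (pre (Up b a))) (Psi a b (\<lambda>n. Some (sig gam a b n)) (pre (Dn a b)))"
    by (rule Psi_inv_pair[OF inv_pair_sym[OF isig_pair[OF gs ba]] pre_bij[OF ba]])
  show ?thesis
    by (rule adj_pull[OF ip Psi_dom Psi_dom _ g]) (use chi_Dn[OF gs ba] in blast)
qed

fun tau_e :: "('k::order \<Rightarrow> 'k \<Rightarrow> (nat \<Rightarrow> complex) \<Rightarrow> (nat \<Rightarrow> complex)) \<Rightarrow> 'k elem \<Rightarrow> nat \<Rightarrow> nat option" where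
  "tau_e gam (Dn b a) = isig gam a b"
| "tau_e gam (Up b a) = (\<lambda>n. Some (sig gam a b n))"

fun tau :: "('k::order \<Rightarrow> 'k \<Rightarrow> (nat \<Rightarrow> complex) \<Rightarrow> (nat \<Rightarrow> complex)) \<Rightarrow> 'k elem list \<Rightarrow> nat \<Rightarrow> nat option" where
  "tau gam [] = Some"
| "tau gam (x # xs) = (\<lambda>m. Option.bind (tau_e gam x m) (tau gam xs))"

lemma pinj_Some: "pinj Some" unfolding pinj_def by auto

lemma pinj_bind: "pinj \<tau>1 \<Longrightarrow> pinj \<tau>2 \<Longrightarrow> pinj (\<lambda>k. Option.bind (\<tau>1 k) \<tau>2)"
  unfolding pinj_def by (auto simp: bind_eq_Some_conv)

lemma chi_seq_Cons: "chi_seq gam (x # xs) = chi_elem gam x \<circ> chi_seq gam xs"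
  by (simp add: chi_seq_def)

lemma chi_seq_Nil: "chi_seq gam [] = id"
  by (simp add: chi_seq_def)

lemma elem_char:
  assumes gs: "gamma_system gam" and v: "evalid x"
  shows "pinj (tau_e gam x) \<and> (\<exists>P Q. bijpair (Spaths (eend x)) (Spaths (estart x)) P Q \<and>
     (\<forall>f\<in>l2H. chi_elem gam x f = pull (Psi (estart x) (eend x) (tau_e gam x) P) f))"
proof (cases x)
  case (Up b a)
  then have ba: "b \<le> a" using v by simp
  have "pinj (\<lambda>n. Some (sig gam a b n))" by (rule sig_pinj[OF gs ba])
  then show ?thesis using Up chi_Up[OF gs ba] bijpair_sym[OF pre_bij[OF ba]] by auto
next
  case (Dn b a)
  then have ab: "a \<le> b" using v by simp
  show ?thesis using Dn chi_Dn[OF gs ab] pre_bij[OF ab] isig_pinj[OF gs ab] by auto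
qed

lemma chain_char:
  assumes gs: "gamma_system gam"
  shows "pwf xs \<Longrightarrow> pinj (tau gam xs) \<and> (\<exists>P Q. bijpair (Spaths (pend xs)) (Spaths (pstart xs)) P Q \<and>
     (\<forall>f\<in>l2H. chi_seq gam xs f = pull (Psi (pstart xs) (pend xs) (tau gam xs) P) f))"
proof (induction xs)
  case Nil then show ?case by (simp add: pwf_def)
next
  case (Cons x xs)
  have vx: "evalid x" using Cons.prems by (simp add: pwf_Cons)
  obtain P1 Q1 where el: "pinj (tau_e gam x)" "bijpair (Spaths (eend x)) (Spaths (estart x)) P1 Q1"
     "\<forall>f\<in>l2H. chi_elem gam x f = pull (Psi (estart x) (eend x) (tau_e gam x) P1) f"
    using elem_char[OF gs vx] by blast
  show ?case
  proof (cases "xs = []")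
    case True
    have t: "tau gam [x] = tau_e gam x" by (rule ext) (simp add: bind_eq_Some_conv option.case_eq_if)
    show ?thesis using True el t by (auto simp: chi_seq_Cons chi_seq_Nil)
  next
    case False
    then have w: "pwf xs" "estart x = pend xs" using Cons.prems by (auto simp: pwf_Cons)
    obtain P2 Q2 where ih: "pinj (tau gam xs)" "bijpair (Spaths (pend xs)) (Spaths (pstart xs)) P2 Q2"
     "\<forall>f\<in>l2H. chi_seq gam xs f = pull (Psi (pstart xs) (pend xs) (tau gam xs) P2) f"
      using Cons.IH[OF w(1)] by blast
    have pj2: "pinj (Psi (pstart xs) (pend xs) (tau gam xs) P2)" by (rule Psi_pinj[OF ih(1,2)])
    have into: "\<forall>r\<in>Spaths (eend x). P1 r \<in> Spaths (pend xs)"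
      using el(2) w(2) unfolding bijpair_def by auto
    have "chi_seq gam (x # xs) f = pull (Psi (pstart (x # xs)) (pend (x # xs)) (tau gam (x # xs)) (P2 \<circ> P1)) f"
      if f: "f \<in> l2H" for f
    proof -
      have l: "chi_seq gam xs f \<in> l2H" using ih(3) f pull_l2[OF pj2 Psi_dom f] by simp
      have "chi_seq gam (x # xs) f = chi_elem gam x (chi_seq gam xs f)" by (simp add: chi_seq_Cons)
      also have "\<dots> = pull (Psi (pend xs) (eend x) (tau_e gam x) P1) (pull (Psi (pstart xs) (pend xs) (tau gam xs) P2) f)"
        using el(3) l ih(3) f w(2) by simp
      also have "\<dots> = pull (Psi (pstart xs) (eend x) (\<lambda>k. Option.bind (tau_e gam x k) (tau gam xs)) (P2 \<circ> P1)) f"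
        unfolding pull_comp Psi_comp[OF into] ..
      finally show ?thesis using False by (simp add: pstart_Cons)
    qed
    moreover have "bijpair (Spaths (pend (x # xs))) (Spaths (pstart (x # xs))) (P2 \<circ> P1) (Q1 \<circ> Q2)"
      using bijpair_comp[OF el(2) ih(2)[folded w(2)]] False by (simp add: pstart_Cons)
    moreover have "pinj (tau gam (x # xs))" using pinj_bind[OF el(1) ih(1)] by simp
    ultimately show ?thesis by blast
  qed
qed




lemma tau_append_fun: "tau gam (ys @ zs) = (\<lambda>m. Option.bind (tau gam ys m) (tau gam zs))"
proof (induction ys)
  case (Cons y ys)
  show ?case by (simp only: append_Cons tau.simps Cons.IH bind_assoc)
qed simp

lemma tau_append: "tau gam (ys @ zs) m = Option.bind (tau gam ys m) (tau gam zs)"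
  by (simp add: tau_append_fun)

lemma tau_e_einv:
  assumes gs: "gamma_system gam" and v: "evalid x"
  shows "tau_e gam (einv x) k = Some n \<longleftrightarrow> tau_e gam x n = Some k"
proof (cases x)
  case (Up b a)
  then have ba: "b \<le> a" using v by simp
  show ?thesis using Up isig_iff[OF gs ba] by auto
next
  case (Dn b a)
  then have ab: "a \<le> b" using v by simp
  show ?thesis using Dn isig_iff[OF gs ab] by auto
qed

lemma tau_pinv:
  assumes gs: "gamma_system gam"
  shows "\<forall>e\<in>set xs. evalid e \<Longrightarrow> tau gam (pinv xs) k = Some n \<longleftrightarrow> tau gam xs n = Some k"
proof (induction xs arbitrary: k n)
  case Nil then show ?case by (auto simp: pinv_def)
next
  case (Cons x xs)
  have v: "evalid x" using Cons.prems by simp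
  have "tau gam (pinv (x # xs)) k = Some n \<longleftrightarrow>
        (\<exists>j. tau gam (pinv xs) k = Some j \<and> tau_e gam (einv x) j = Some n)"
    by (simp add: pinv_Cons tau_append bind_eq_Some_conv)
  also have "\<dots> \<longleftrightarrow> (\<exists>j. tau gam xs j = Some k \<and> tau_e gam x n = Some j)"
    using Cons.IH Cons.prems tau_e_einv[OF gs v] by auto
  also have "\<dots> \<longleftrightarrow> tau gam (x # xs) n = Some k"
    by (auto simp: bind_eq_Some_conv)
  finally show ?case .
qed

lemma ran_pinv_app:
  assumes gs: "gamma_system gam" and v: "\<forall>e\<in>set xs. evalid e"
  shows "ran (tau gam (pinv xs @ xs)) = ran (tau gam xs)"
proof
  show "ran (tau gam (pinv xs @ xs)) \<subseteq> ran (tau gam xs)"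
  proof
    fix m assume "m \<in> ran (tau gam (pinv xs @ xs))"
    then obtain k where "tau gam (pinv xs @ xs) k = Some m" unfolding ran_def by blast
    then obtain j where "tau gam (pinv xs) k = Some j" "tau gam xs j = Some m"
      by (auto simp: tau_append bind_eq_Some_conv)
    then show "m \<in> ran (tau gam xs)" unfolding ran_def by blast
  qed
next
  show "ran (tau gam xs) \<subseteq> ran (tau gam (pinv xs @ xs))"
  proof
    fix m assume "m \<in> ran (tau gam xs)"
    then obtain j where j: "tau gam xs j = Some m" unfolding ran_def by blast
    then have "tau gam (pinv xs) m = Some j" using tau_pinv[OF gs v] by blast
    then have "tau gam (pinv xs @ xs) m = Some m" using j by (simp add: tau_append)
    then show "m \<in> ran (tau gam (pinv xs @ xs))" unfolding ran_def by blast
  qed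
qed

definition Msub :: "nat set \<Rightarrow> (nat \<Rightarrow> complex) set" where
  "Msub R = {h \<in> l2 UNIV. \<forall>k. k \<notin> R \<longrightarrow> h k = 0}"

lemma sum_split_zero:
  assumes h: "sqn h summable_on UNIV"
  shows "infsum (sqn h) R = infsum (sqn h) UNIV \<longleftrightarrow> (\<forall>k. k \<notin> R \<longrightarrow> h k = 0)"
proof -
  have s1: "sqn h summable_on R" "sqn h summable_on (-R)"
    using summable_on_subset_banach[OF h] by blast+
  have "infsum (sqn h) UNIV = infsum (sqn h) (R \<union> -R)" by simp
  also have "\<dots> = infsum (sqn h) R + infsum (sqn h) (-R)"
    by (rule infsum_Un_disjoint[OF s1]) auto
  finally have sp: "infsum (sqn h) UNIV = infsum (sqn h) R + infsum (sqn h) (-R)" .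
  show ?thesis
  proof
    assume "infsum (sqn h) R = infsum (sqn h) UNIV"
    then have z: "infsum (sqn h) (-R) \<le> 0" using sp by simp
    show "\<forall>k. k \<notin> R \<longrightarrow> h k = 0"
    proof (intro allI impI)
      fix k assume "k \<notin> R"
      then have "sqn h k = 0" using nonneg_infsum_le_0D[OF z s1(2)] by auto
      then show "h k = 0" by simp
    qed
  next
    assume "\<forall>k. k \<notin> R \<longrightarrow> h k = 0"
    then have "infsum (sqn h) (-R) = 0" by (intro infsum_0) auto
    then show "infsum (sqn h) R = infsum (sqn h) UNIV" using sp by simp
  qed
qed

lemma Hdom_char:
  assumes gs: "gamma_system gam" and w: "pwf ys" and s: "pstart ys = a" and e: "pend ys = a"
  shows "Hdom gam ys = Msub (ran (tau gam ys))"
proof -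
  obtain P Q where ch: "pinj (tau gam ys)" "bijpair (Spaths a) (Spaths a) P Q"
     "\<forall>f\<in>l2H. chi_seq gam ys f = pull (Psi a a (tau gam ys) P) f"
    using chain_char[OF gs w] s e by auto
  define R where "R = ran (tau gam ys)"
  have pj: "pinj (Psi a a (tau gam ys) P)" by (rule Psi_pinj[OF ch(1,2)])
  have key: "l2norm (chi_seq gam ys (tens a h q)) = l2norm h \<longleftrightarrow> (\<forall>k. k \<notin> R \<longrightarrow> h k = 0)"
    if h: "h \<in> l2 UNIV" and q: "q \<in> Spaths a" for h q
  proof -
    have inj: "inj_on (\<lambda>k. (a, k, q)) R" by (auto simp: inj_on_def)
    have "infsum (sqn (tens a h q)) (ran (Psi a a (tau gam ys) P))
        = infsum (sqn (tens a h q)) ((\<lambda>k. (a, k, q)) ` R)"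
      by (rule infsum_cong_neutral)
         (use ran_Psi[OF ch(2)] q in \<open>auto simp: tens_def R_def\<close>)
    also have "\<dots> = infsum (sqn h) R"
      by (subst infsum_reindex[OF inj]) (simp add: o_def tens_def)
    finally have eq: "infsum (sqn (tens a h q)) (ran (Psi a a (tau gam ys) P)) = infsum (sqn h) R" .
    have "l2norm (chi_seq gam ys (tens a h q)) = sqrt (infsum (sqn h) R)"
      using ch(3) tens_l2[OF h q] pull_infsum[OF pj] eq by (simp add: l2norm_def)
    then have "l2norm (chi_seq gam ys (tens a h q)) = l2norm h \<longleftrightarrow> infsum (sqn h) R = infsum (sqn h) UNIV"
      by (simp add: l2norm_def)
    also have "\<dots> \<longleftrightarrow> (\<forall>k. k \<notin> R \<longrightarrow> h k = 0)" by (rule sum_split_zero[OF l2_summ[OF h]])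
    finally show ?thesis .
  qed
  show ?thesis unfolding Hdom_def Msub_def R_def[symmetric] s
    using key Spaths_nonempty[of a] by blast
qed

lemma l2inner_delta_right: "l2inner f (delta j) = cnj (f j)"
proof -
  have "l2inner f (delta j) = infsum (\<lambda>i. cnj (f i) * delta j i) {j}"
    unfolding l2inner_def by (rule infsum_cong_neutral) (auto simp: delta_def)
  thus ?thesis by (simp add: delta_def)
qed

lemma orth_proj_Msub:
  assumes h: "h \<in> l2 UNIV"
  shows "orth_proj (Msub R) h = (\<lambda>k. if k \<in> R then h k else 0)"
  unfolding orth_proj_def
proof (rule the_equality)
  let ?c = "\<lambda>k. if k \<in> R then h k else 0"
  show "?c \<in> Msub R \<and> (\<forall>x\<in>Msub R. l2inner (\<lambda>n. h n - ?c n) x = 0)"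
  proof
    show "?c \<in> Msub R" unfolding Msub_def using l2_restr[OF h] by auto
    show "\<forall>x\<in>Msub R. l2inner (\<lambda>n. h n - ?c n) x = 0"
      unfolding l2inner_def Msub_def by (auto intro!: infsum_0)
  qed
  fix m assume m: "m \<in> Msub R \<and> (\<forall>x\<in>Msub R. l2inner (\<lambda>n. h n - m n) x = 0)"
  show "m = ?c"
  proof
    fix k
    show "m k = ?c k"
    proof (cases "k \<in> R")
      case True
      have "delta k \<in> Msub R" unfolding Msub_def using True delta_l2[of k UNIV]
        by (auto simp: delta_def)
      then have "l2inner (\<lambda>n. h n - m n) (delta k) = 0" using m by blast
      then have "cnj (h k - m k) = 0" by (simp add: l2inner_delta_right)
      then show ?thesis using True by simp
    next
      case False
      then show ?thesis using m unfolding Msub_def by auto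
    qed
  qed
qed

lemma pull_pull_inv:
  assumes "inv_pair \<psi> \<psi>'"
  shows "pull \<psi>' (pull \<psi> f) = (\<lambda>i. if \<psi>' i \<noteq> None then f i else 0)"
proof
  fix i
  show "pull \<psi>' (pull \<psi> f) i = (if \<psi>' i \<noteq> None then f i else 0)"
  proof (cases "\<psi>' i")
    case (Some j)
    then have "\<psi> j = Some i" using assms unfolding inv_pair_def by blast
    then show ?thesis using Some unfolding pull_def by simp
  qed (simp add: pull_def)
qed

lemma pinvm_None: "pinvm \<tau> n \<noteq> None \<longleftrightarrow> n \<in> ran \<tau>"
  unfolding pinvm_def ran_def by auto

theorem corollary3p5:
  fixes gam :: "'k::order \<Rightarrow> 'k \<Rightarrow> (nat \<Rightarrow> complex) \<Rightarrow> (nat \<Rightarrow> complex)"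
    and xs :: "'k elem list" and a :: 'k
  assumes "gamma_system gam"
    and "pwf xs" and "pend xs = a" and "pstart xs = a"
  shows "Hdom gam (pinv xs @ xs) = Hdom gam xs \<and>
         (\<forall>f\<in>l2H. adj Bidx (chi_seq gam xs) (chi_seq gam xs f)
                   = tensor_id a (orth_proj (Hdom gam xs)) f)"
proof
  note gs = assms(1)
  have pv: "pwf (pinv xs)" "pstart (pinv xs) = a" "pend (pinv xs) = a"
    using pinv_wf[OF assms(2)] assms(3,4) by auto
  have pa: "pwf (pinv xs @ xs) \<and> pstart (pinv xs @ xs) = pstart xs \<and> pend (pinv xs @ xs) = pend (pinv xs)"
    by (rule pwf_append[OF pv(1) assms(2)]) (simp add: pv assms)
  have v: "\<forall>e\<in>set xs. evalid e" using assms(2) by (simp add: pwf_def)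
  have HD: "Hdom gam xs = Msub (ran (tau gam xs))"
    by (rule Hdom_char[OF gs assms(2,4,3)])
  show "Hdom gam (pinv xs @ xs) = Hdom gam xs"
    using Hdom_char[OF gs, of "pinv xs @ xs" a] pa pv assms HD ran_pinv_app[OF gs v] by simp
  obtain P Q where ch: "pinj (tau gam xs)" "bijpair (Spaths a) (Spaths a) P Q"
     "\<forall>f\<in>l2H. chi_seq gam xs f = pull (Psi a a (tau gam xs) P) f"
    using chain_char[OF gs assms(2)] assms(3,4) by auto
  define \<Psi> where "\<Psi> = Psi a a (tau gam xs) P"
  define \<Psi>' where "\<Psi>' = Psi a a (pinvm (tau gam xs)) Q"
  have ip: "inv_pair \<Psi> \<Psi>'" unfolding \<Psi>_def \<Psi>'_def
    by (rule Psi_inv_pair[OF pinvm_inv_pair[OF ch(1)] ch(2)])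
  have pj: "pinj \<Psi>" unfolding \<Psi>_def by (rule Psi_pinj[OF ch(1,2)])
  show "\<forall>f\<in>l2H. adj Bidx (chi_seq gam xs) (chi_seq gam xs f) = tensor_id a (orth_proj (Hdom gam xs)) f"
  proof
    fix f :: "'k idx \<Rightarrow> complex" assume f: "f \<in> l2H"
    have cf: "chi_seq gam xs f = pull \<Psi> f" using ch(3) f \<Psi>_def by simp
    have l: "pull \<Psi> f \<in> l2H" by (rule pull_l2[OF pj _ f]) (simp add: \<Psi>_def Psi_dom)
    have "adj Bidx (chi_seq gam xs) (chi_seq gam xs f) = pull \<Psi>' (pull \<Psi> f)"
      unfolding cf by (rule adj_pull[OF ip]) (use ch(3) l in \<open>auto simp: \<Psi>_def \<Psi>'_def Psi_dom\<close>)
    also have "\<dots> = (\<lambda>i. if \<Psi>' i \<noteq> None then f i else 0)" by (rule pull_pull_inv[OF ip])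
    also have "\<dots> = tensor_id a (orth_proj (Hdom gam xs)) f"
    proof
      fix i :: "'k idx"
      obtain c n q where i: "i = (c, n, q)" by (cases i) auto
      have np: "\<Psi>' (c, n, q) \<noteq> None \<longleftrightarrow> c = a \<and> q \<in> Spaths a \<and> n \<in> ran (tau gam xs)"
        unfolding \<Psi>'_def Psi_def by (auto simp: pinvm_None[symmetric])
      have z: "f (a, n, q) = 0" if "q \<notin> Spaths a"
        using l2_zero_out[OF f] that by (auto simp: Bidx_def)
      show "(if \<Psi>' i \<noteq> None then f i else 0) = tensor_id a (orth_proj (Hdom gam xs)) f i"
        unfolding i np tensor_id_def HD using orth_proj_Msub[OF slice_l2[OF f]] z by auto
    qed
    finally show "adj Bidx (chi_seq gam xs) (chi_seq gam xs f) = tensor_id a (orth_proj (Hdom gam xs)) f" .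
  qed
qed



end
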